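(* Let $u\neq v\in V$ and let $\pi_{u,v}$ be the total causal effect of $Y_v$ on $Y_u$ in a linear structural equation model with DAG $G$. Let $\alpha\in(0,1)$ and suppose the data-dependent set of permutations $\hat\Theta(\mathbf Y,\alpha/2)$ satisfies, for every causal ordering $\theta\in\Theta(G)$, $\lim_{n\to\infty}P\big(\theta\in\hat\Theta(\mathbf Y,\alpha/2)\big)\ge 1-\alpha/2$. Suppose that for every $S\subseteq V\setminus\{u,v\}$, $C(S)$ is a data-dependent confidence interval for the coefficient of $Y_v$ in the regression of $Y_u$ onto $Y_{S\cup\{v\}}$ such that, whenever $S$ is a valid adjustment set for the effect of $v$ on $u$, $\lim_{n\to\infty}P(\pi_{u,v}\in C(S))\ge 1-\alpha/2$. Define $\mathcal S=\{\mathrm{pr}_\theta(v):\theta\in\hat\Theta(\mathbf Y,\alpha/2),\ \theta(v)<\theta(u)\}$ and let $\hat C_\alpha=\{0\}\cup\bigcup_{S\in\mathcal S}C(S)$ if $\theta(u)<\theta(v)$ for some $\theta\in\hat\Theta(\mathbf Y,\alpha/2)$, and $\hat C_\alpha=\bigcup_{S\in\mathcal S}C(S)$ otherwise. Then $\lim_{n\to\infty}P(\pi_{u,v}\in\hat C_\alpha)\ge 1-\alpha$.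
   Context: $V=[p]$ and $G=(V,E)$ is a directed acyclic graph; $\mathrm{pa}(v)$, $\mathrm{an}(v)$ denote the parents and ancestors of $v$. The random vector $Y=(Y_1,\dots,Y_p)$ follows a linear structural equation model $Y_v=\sum_{w\in\mathrm{pa}(v)}\beta_{v,w}Y_w+\varepsilon_v$ with mutually independent mean-zero errors; writing $B_{v,w}=\beta_{v,w}$ if $w\in\mathrm{pa}(v)$ and $0$ otherwise, $Y=BY+\varepsilon$, and the total causal effect of $v$ on $u$ is $\pi_{u,v}=\partial E[Y_u\mid\mathrm{do}(Y_v=y)]/\partial y=((I-B)^{-1})_{u,v}$ (in particular $\pi_{u,v}=0$ if $v\notin\mathrm{an}(u)$). A causal ordering of $G$ is a permutation $\theta$ of $V$ such that $\theta(w)<\theta(z)$ only if $z\notin\mathrm{an}(w)$; $\Theta(G)$ is the set of causal orderings, and $\mathrm{pr}_\theta(v)=\{w:\theta(w)<\theta(v)\}$. $\mathbf Y$ denotes a sample of $n$ i.i.d. copies of $Y$, and $\hat\Theta(\mathbf Y,\alpha/2)$ is any set of permutations computed from $\mathbf Y$. A set $S\subseteq V\setminus\{v\}$ is a valid adjustment set for the effect of $v$ on $u$ if the coefficient of $Y_v$ in the population least-squares regression of $Y_u$ on $Y_{S\cup\{v\}}$ equals $\pi_{u,v}$. *)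

theory Defs
  imports "HOL-Probability.Probability"
begin

text \<open>Vertices V are the elements of a finite type 'n (so p = CARD('n)).
  Edges (w,v) in E mean w -> v.\<close>

definition pa :: "('n \<times> 'n) set \<Rightarrow> 'n \<Rightarrow> 'n set" where
  "pa E v = {w. (w, v) \<in> E}"

definition an :: "('n \<times> 'n) set \<Rightarrow> 'n \<Rightarrow> 'n set" where
  "an E v = {w. (w, v) \<in> E\<^sup>+}"

text \<open>B is the SEM coefficient matrix: B v w = beta(v,w) if w in pa(v), else 0.\<close>
definition sem_matrix :: "('n::finite \<times> 'n) set \<Rightarrow> real^'n^'n \<Rightarrow> bool" where
  "sem_matrix E B \<longleftrightarrow> (\<forall>v w. w \<notin> pa E v \<longrightarrow> B $ v $ w = 0)"

definition total_effect :: "real^'n^'n \<Rightarrow> 'n::finite \<Rightarrow> 'n \<Rightarrow> real" where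
  "total_effect B u v = matrix_inv (mat 1 - B) $ u $ v"

definition is_perm :: "('n::finite \<Rightarrow> nat) \<Rightarrow> bool" where
  "is_perm \<theta> \<longleftrightarrow> bij_betw \<theta> (UNIV :: 'n set) {..<CARD('n)}"

definition causal_orderings :: "('n::finite \<times> 'n) set \<Rightarrow> ('n \<Rightarrow> nat) set" where
  "causal_orderings E = {\<theta>. is_perm \<theta> \<and> (\<forall>w z. \<theta> w < \<theta> z \<longrightarrow> z \<notin> an E w)}"

definition prec :: "('n \<Rightarrow> nat) \<Rightarrow> 'n \<Rightarrow> 'n set" where
  "prec \<theta> v = {w. \<theta> w < \<theta> v}"

text \<open>Law of Y = (I - B)^{-1} eps, where eps has independent coordinates eps_w ~ mu w.\<close>
definition obs_law :: "real^'n^'n \<Rightarrow> ('n::finite \<Rightarrow> real measure) \<Rightarrow> ('n \<Rightarrow> real) measure" where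
  "obs_law B \<mu> = distr (PiM UNIV \<mu>) (PiM UNIV (\<lambda>_. borel))
     (\<lambda>e v. \<Sum>w\<in>UNIV. matrix_inv (mat 1 - B) $ v $ w * e w)"

text \<open>Law of a sample of n i.i.d. copies of Y (observation i is omega i, i < n).\<close>
definition sample_law :: "real^'n^'n \<Rightarrow> ('n::finite \<Rightarrow> real measure) \<Rightarrow> nat \<Rightarrow> (nat \<Rightarrow> 'n \<Rightarrow> real) measure" where
  "sample_law B \<mu> n = PiM {..<n} (\<lambda>_. obs_law B \<mu>)"

definition prob_n :: "real^'n^'n \<Rightarrow> ('n::finite \<Rightarrow> real measure) \<Rightarrow> nat \<Rightarrow> ((nat \<Rightarrow> 'n \<Rightarrow> real) \<Rightarrow> bool) \<Rightarrow> real" where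
  "prob_n B \<mu> n P = measure (sample_law B \<mu> n) {\<omega> \<in> space (sample_law B \<mu> n). P \<omega>}"

definition ls_coef :: "('n::finite \<Rightarrow> real) measure \<Rightarrow> 'n \<Rightarrow> 'n set \<Rightarrow> ('n \<Rightarrow> real) \<Rightarrow> bool" where
  "ls_coef L u T b \<longleftrightarrow> (\<forall>t. t \<notin> T \<longrightarrow> b t = 0) \<and>
     (\<forall>c. (\<forall>t. t \<notin> T \<longrightarrow> c t = 0) \<longrightarrow>
        (LINT y|L. (y u - (\<Sum>t\<in>T. b t * y t))\<^sup>2) \<le> (LINT y|L. (y u - (\<Sum>t\<in>T. c t * y t))\<^sup>2))"

definition valid_adjustment :: "real^'n^'n \<Rightarrow> ('n::finite \<Rightarrow> real measure) \<Rightarrow> 'n \<Rightarrow> 'n \<Rightarrow> 'n set \<Rightarrow> bool" where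
  "valid_adjustment B \<mu> u v S \<longleftrightarrow> v \<notin> S \<and>
     (\<exists>b. ls_coef (obs_law B \<mu>) u (S \<union> {v}) b) \<and>
     (\<forall>b. ls_coef (obs_law B \<mu>) u (S \<union> {v}) b \<longrightarrow> b v = total_effect B u v)"

definition adj_sets :: "('n \<Rightarrow> nat) set \<Rightarrow> 'n \<Rightarrow> 'n \<Rightarrow> 'n set set" where
  "adj_sets Th u v = {prec \<theta> v | \<theta>. \<theta> \<in> Th \<and> \<theta> v < \<theta> u}"

definition conf_set :: "('n \<Rightarrow> nat) set \<Rightarrow> ('n set \<Rightarrow> real set) \<Rightarrow> 'n \<Rightarrow> 'n \<Rightarrow> real set" where
  "conf_set Th CS u v =
     (if \<exists>\<theta>\<in>Th. \<theta> u < \<theta> v then {0} else {}) \<union> (\<Union>S\<in>adj_sets Th u v. CS S)"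

end

theory Submission
  imports Defs
begin

lemma topo_aux:
  fixes E :: "('n \<times> 'n) set"
  assumes wf: "wf ((E\<^sup>+)\<inverse>)" and fin: "finite V"
  shows "\<exists>f. bij_betw f V {..<card V} \<and> (\<forall>w\<in>V. \<forall>z\<in>V. (w,z)\<in>E\<^sup>+ \<longrightarrow> f w < f z)"
  using fin
proof (induction "card V" arbitrary: V)
  case 0
  then show ?case by (auto simp: bij_betw_def)
next
  case (Suc k)
  then have "V \<noteq> {}" by auto
  then obtain m where m: "m \<in> V" "\<forall>y. (y,m) \<in> (E\<^sup>+)\<inverse> \<longrightarrow> y \<notin> V"
    using wfE_min[OF wf] by (metis ex_in_conv)
  have ck: "card (V - {m}) = k" using Suc m by auto
  obtain f where f: "bij_betw f (V - {m}) {..<k}"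
    "\<forall>w\<in>V-{m}. \<forall>z\<in>V-{m}. (w,z)\<in>E\<^sup>+ \<longrightarrow> f w < f z"
    using Suc(1)[OF ck[symmetric]] Suc(3) ck by auto
  define g where "g = f(m := k)"
  have "bij_betw g (V - {m}) {..<k}"
    using f(1) unfolding g_def by (rule bij_betw_cong[THEN iffD1, rotated]) auto
  then have "bij_betw g (V - {m} \<union> {m}) ({..<k} \<union> {g m})"
    by (intro notIn_Un_bij_betw) (auto simp: g_def)
  then have "bij_betw g (insert m (V - {m})) (insert k {..<k})"
    by (simp add: g_def)
  moreover have "insert m (V - {m}) = V" using m by auto
  moreover have "insert k {..<k} = {..<card V}" using Suc by auto
  ultimately have b: "bij_betw g V {..<card V}" by simp
  have "\<forall>w\<in>V. \<forall>z\<in>V. (w,z)\<in>E\<^sup>+ \<longrightarrow> g w < g z"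
  proof (intro ballI impI)
    fix w z assume w: "w \<in> V" and z: "z \<in> V" and wz: "(w,z)\<in>E\<^sup>+"
    have "w \<noteq> m" using m(2) z wz by auto
    show "g w < g z"
    proof (cases "z = m")
      case True
      then show ?thesis using f(1) w \<open>w \<noteq> m\<close> unfolding g_def bij_betw_def by auto
    next
      case False
      then show ?thesis using f(2) w z \<open>w \<noteq> m\<close> wz unfolding g_def by auto
    qed
  qed
  with b show ?case by blast
qed

lemma causal_ordering_exists:
  fixes E :: "('n::finite \<times> 'n) set"
  assumes "acyclic E"
  shows "\<exists>\<theta>. \<theta> \<in> causal_orderings E"
proof -
  have "wf ((E\<^sup>+)\<inverse>)"
    by (metis acyclic_converse acyclic_def assms finite finite_acyclic_wf finite_converse trancl_trans trans_trancl wf_converse_trancl wf_trancl ) 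
  from topo_aux[OF this, of UNIV] obtain f where f: "bij_betw f (UNIV::'n set) {..<CARD('n)}"
    "\<forall>w z. (w,z)\<in>E\<^sup>+ \<longrightarrow> f w < f z" by auto
  have "f \<in> causal_orderings E"
    unfolding causal_orderings_def is_perm_def an_def using f by (auto dest: less_asym)
  then show ?thesis by blast
qed

lemma mat1_minus: "(mat 1 - B :: real^'n::finite^'n) $ i $ j = (if i = j then 1 else 0) - B $ i $ j"
  by (simp add: mat_def)

lemma if_minus_mult: "((if P then 1 else 0) - b) * (y::real) = (if P then y else 0) - b * y"
  by (simp add: left_diff_distrib)

lemma mv_entry: "((M :: real^'n::finite^'n) *v y) $ t = (\<Sum>s\<in>UNIV. M $ t $ s * y $ s)"
  by (simp add: matrix_vector_mult_def)

lemma B_tri: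
  fixes E :: "('n::finite \<times> 'n) set"
  assumes dag: "acyclic E" and sem: "sem_matrix E B" and th: "\<theta> \<in> causal_orderings E"
    and nz: "B $ x $ t \<noteq> 0"
  shows "\<theta> t < \<theta> x"
proof -
  have e: "(t, x) \<in> E" using sem nz unfolding sem_matrix_def pa_def by auto
  then have "t \<in> an E x" unfolding an_def by auto
  then have "\<not> \<theta> x < \<theta> t" using th unfolding causal_orderings_def by auto
  moreover have "t \<noteq> x" using dag e unfolding acyclic_def by auto
  moreover have "inj \<theta>" using th unfolding causal_orderings_def is_perm_def bij_betw_def by auto
  ultimately show ?thesis by (metis inj_eq linorder_neqE_nat)
qed

lemma kernel_zero:
  fixes B :: "real^'n^'n" and \<theta> :: "'n::finite \<Rightarrow> nat"
  assumes tri: "\<And>x t. B $ x $ t \<noteq> 0 \<Longrightarrow> \<theta> t < \<theta> x"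
    and k: "(mat 1 - B) *v y = 0"
  shows "y = 0"
proof -
  have eq: "y $ t = (\<Sum>s\<in>UNIV. B $ t $ s * y $ s)" for t
  proof -
    have "((mat 1 - B) *v y) $ t = 0" by (simp only: k zero_index)
    moreover have "((mat 1 - B) *v y) $ t = y $ t - (\<Sum>s\<in>UNIV. B $ t $ s * y $ s)"
    proof -
      have "((mat 1 - B) *v y) $ t = (\<Sum>s\<in>UNIV. ((if t = s then 1 else 0) - B $ t $ s) * y $ s)"
        by (simp only: mv_entry mat1_minus)
      also have "\<dots> = (\<Sum>s\<in>UNIV. (if t = s then y $ s else 0) - B $ t $ s * y $ s)"
        by (simp only: if_minus_mult)
      also have "\<dots> = (\<Sum>s\<in>UNIV. (if t = s then y $ s else 0)) - (\<Sum>s\<in>UNIV. B $ t $ s * y $ s)"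
        by (simp only: sum_subtractf)
      also have "\<dots> = y $ t - (\<Sum>s\<in>UNIV. B $ t $ s * y $ s)"
        by (simp add: sum.delta)
      finally show ?thesis .
    qed
    ultimately show ?thesis by linarith
  qed
  have "y $ t = 0" for t
  proof (induction t rule: measure_induct_rule[of \<theta>])
    case (less t)
    have "(\<Sum>s\<in>UNIV. B $ t $ s * y $ s) = 0"
    proof (rule sum.neutral, rule ballI)
      fix s assume "s \<in> (UNIV :: 'n set)"
      show "B $ t $ s * y $ s = 0"
      proof (cases "B $ t $ s = 0")
        case False
        then have "\<theta> s < \<theta> t" by (rule tri)
        then have "y $ s = 0" by (rule less)
        then show ?thesis by simp
      qed simp
    qed
    then show ?case using eq[of t] by linarith
  qed
  then show ?thesis by (simp add: vec_eq_iff)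
qed

lemma inverse_exists:
  fixes B :: "real^'n^'n" and \<theta> :: "'n::finite \<Rightarrow> nat"
  assumes tri: "\<And>x t. B $ x $ t \<noteq> 0 \<Longrightarrow> \<theta> t < \<theta> x"
  shows "matrix_inv (mat 1 - B) ** (mat 1 - B) = mat 1 \<and> (mat 1 - B) ** matrix_inv (mat 1 - B) = mat 1"
proof -
  have "inj ((*v) (mat 1 - B))"
  proof (rule injI)
    fix x y assume "(mat 1 - B) *v x = (mat 1 - B) *v y"
    then have "(mat 1 - B) *v (x - y) = 0" by (simp add: matrix_vector_mult_diff_distrib)
    then show "x = y" using kernel_zero[of B \<theta>, OF tri, of "x - y"] by simp
  qed
  then obtain A' where "A' ** (mat 1 - B) = mat 1" using matrix_left_invertible_injective by blast
  then have "\<exists>A'. (mat 1 - B) ** A' = mat 1 \<and> A' ** (mat 1 - B) = mat 1"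
    using matrix_left_right_inverse by blast
  from someI_ex[OF this] show ?thesis unfolding matrix_inv_def by blast
qed

lemma entry_left:
  fixes M A :: "real^'n^'n"
  assumes "A ** M = mat 1"
  shows "(\<Sum>k\<in>UNIV. A $ i $ k * M $ k $ j) = (if i = j then 1 else 0)"
proof -
  have "(A ** M) $ i $ j = (mat 1 :: real^'n^'n) $ i $ j" using assms by simp
  then show ?thesis by (simp add: matrix_matrix_mult_def mat_def)
qed

lemma A_zero:
  fixes B :: "real^'n^'n" and \<theta> :: "'n::finite \<Rightarrow> nat"
  assumes tri: "\<And>x t. B $ x $ t \<noteq> 0 \<Longrightarrow> \<theta> t < \<theta> x"
    and inj: "inj \<theta>"
  shows "\<theta> t < \<theta> w \<Longrightarrow> matrix_inv (mat 1 - B) $ t $ w = 0"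
proof (induction t rule: measure_induct_rule[of \<theta>])
  case (less t)
  define A where "A = matrix_inv (mat 1 - B)"
  have "(mat 1 - B) ** A = mat 1" using inverse_exists[of B \<theta>, OF tri] A_def by blast
  from entry_left[OF this, of t w] have
    "(\<Sum>k\<in>UNIV. (mat 1 - B) $ t $ k * A $ k $ w) = 0" using less.prems by auto
  moreover have "(\<Sum>k\<in>UNIV. (mat 1 - B) $ t $ k * A $ k $ w) = A $ t $ w - (\<Sum>k\<in>UNIV. B $ t $ k * A $ k $ w)"
  proof -
    have "(\<Sum>k\<in>UNIV. (mat 1 - B) $ t $ k * A $ k $ w) = (\<Sum>k\<in>UNIV. ((if t = k then 1 else 0) - B $ t $ k) * A $ k $ w)"
      by (simp only: mat1_minus)
    also have "\<dots> = (\<Sum>k\<in>UNIV. (if t = k then A $ k $ w else 0) - B $ t $ k * A $ k $ w)"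
      by (simp only: if_minus_mult)
    also have "\<dots> = (\<Sum>k\<in>UNIV. (if t = k then A $ k $ w else 0)) - (\<Sum>k\<in>UNIV. B $ t $ k * A $ k $ w)"
      by (simp only: sum_subtractf)
    finally show ?thesis by simp
  qed
  moreover have "(\<Sum>k\<in>UNIV. B $ t $ k * A $ k $ w) = 0"
    by (rule sum.neutral) (metis A_def less.IH less.prems less_trans mult_eq_0_iff tri)
  ultimately show ?case unfolding A_def by simp
qed

lemma cross_moment:
  fixes \<mu> :: "'n::finite \<Rightarrow> real measure"
  assumes err_prob: "\<forall>w. prob_space (\<mu> w)"
    and err_borel: "\<forall>w. sets (\<mu> w) = sets borel"
    and err_sq: "\<forall>w. integrable (\<mu> w) (\<lambda>x. x\<^sup>2)"
    and err_mean: "\<forall>w. (LINT x|\<mu> w. x) = 0"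
  shows "integrable (PiM UNIV \<mu>) (\<lambda>e. e w * e w') \<and>
         (LINT e|PiM UNIV \<mu>. e w * e w') = (if w = w' then (LINT x|\<mu> w. x\<^sup>2) else 0)"
proof -
  interpret P: product_prob_space \<mu> "UNIV::'n set"
    using err_prob by (simp add: product_prob_space_def product_prob_space_axioms_def
        product_sigma_finite_def prob_space_imp_sigma_finite)
  define f where "f = (\<lambda>i x. (if i = w then x else 1) * (if i = w' then x else (1::real)))"
  have intx: "integrable (\<mu> i) (\<lambda>x. x)" for i
  proof -
    have "(\<lambda>x::real. x) \<in> borel_measurable (\<mu> i)"
      by (rule measurable_ident_sets[OF err_borel[rule_format]])
    then show ?thesis
      using P.M.square_integrable_imp_integrable err_sq
      by blast
  qed
  have intf: "integrable (\<mu> i) (f i)" for i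
    using intx[of i] err_sq unfolding f_def
    by (cases "i = w"; cases "i = w'") (auto simp: power2_eq_square)
  have prodf: "(\<Prod>i\<in>UNIV. f i (e i)) = e w * e w'" for e
    by (simp add: f_def prod.distrib prod.delta)
  have "integrable (PiM UNIV \<mu>) (\<lambda>e. \<Prod>i\<in>UNIV. f i (e i))"
    by (rule P.product_integrable_prod) (auto intro: intf)
  then have I: "integrable (PiM UNIV \<mu>) (\<lambda>e. e w * e w')" by (simp add: prodf)
  have "(LINT e|PiM UNIV \<mu>. (\<Prod>i\<in>UNIV. f i (e i))) = (\<Prod>i\<in>UNIV. integral\<^sup>L (\<mu> i) (f i))"
    by (rule P.product_integral_prod) (auto intro: intf)
  also have "\<dots> = (if w = w' then (LINT x|\<mu> w. x\<^sup>2) else 0)"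
  proof (cases "w = w'")
    case True
    have "integral\<^sup>L (\<mu> i) (f i) = (if i = w then (LINT x|\<mu> w. x\<^sup>2) else 1)" for i
      using True P.M.prob_space by (auto simp: f_def power2_eq_square)
    then show ?thesis using True by (simp add: prod.delta)
  next
    case False
    have "integral\<^sup>L (\<mu> w) (f w) = 0" using False err_mean by (simp add: f_def)
    then show ?thesis using False by (metis finite_class.finite_UNIV iso_tuple_UNIV_I prod_zero)
  qed
  finally show ?thesis using I by (simp add: prodf)
qed

lemma mse_formula:
  fixes \<mu> :: "'n::finite \<Rightarrow> real measure" and g :: "'n \<Rightarrow> real"
  assumes err_prob: "\<forall>w. prob_space (\<mu> w)"
    and err_borel: "\<forall>w. sets (\<mu> w) = sets borel"
    and err_sq: "\<forall>w. integrable (\<mu> w) (\<lambda>x. x\<^sup>2)"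
    and err_mean: "\<forall>w. (LINT x|\<mu> w. x) = 0"
  shows "integrable (PiM UNIV \<mu>) (\<lambda>e. (\<Sum>w\<in>UNIV. g w * e w)\<^sup>2) \<and>
         (LINT e|PiM UNIV \<mu>. (\<Sum>w\<in>UNIV. g w * e w)\<^sup>2) = (\<Sum>w\<in>UNIV. (g w)\<^sup>2 * (LINT x|\<mu> w. x\<^sup>2))"
proof -
  note cm1 = cross_moment[OF assms, THEN conjunct1] and cm2 = cross_moment[OF assms, THEN conjunct2]
  have eq: "(\<Sum>w\<in>UNIV. g w * e w)\<^sup>2 = (\<Sum>w\<in>UNIV. \<Sum>w'\<in>UNIV. (g w * g w') * (e w * e w'))" for e
    by (simp add: power2_eq_square sum_product algebra_simps)
  have I: "integrable (PiM UNIV \<mu>) (\<lambda>e. \<Sum>w\<in>UNIV. \<Sum>w'\<in>UNIV. (g w * g w') * (e w * e w'))"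
    apply (rule Bochner_Integration.integrable_sum)
    apply (rule Bochner_Integration.integrable_sum)
    apply (rule integrable_mult_right)
    apply (rule cm1)
    done
  have "integral\<^sup>L (PiM UNIV \<mu>) (\<lambda>e. \<Sum>w\<in>UNIV. \<Sum>w'\<in>UNIV. (g w * g w') * (e w * e w'))
      = (\<Sum>w\<in>UNIV. \<Sum>w'\<in>UNIV. (g w * g w') * (LINT e|PiM UNIV \<mu>. e w * e w'))"
    using cm1 by (simp add: Bochner_Integration.integral_sum Bochner_Integration.integrable_sum)
  also have "\<dots> = (\<Sum>w\<in>UNIV. \<Sum>w'\<in>UNIV. (g w * g w') * (if w = w' then (LINT x|\<mu> w. x\<^sup>2) else 0))"
    using cm2 by simp
  also have "\<dots> = (\<Sum>w\<in>UNIV. (g w)\<^sup>2 * (LINT x|\<mu> w. x\<^sup>2))"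
    by (simp add: power2_eq_square if_distrib cong: if_cong)
  finally show ?thesis using I by (simp add: eq)
qed

lemma obs_mse:
  fixes \<mu> :: "'n::finite \<Rightarrow> real measure" and B :: "real^'n^'n" and c :: "'n \<Rightarrow> real"
  assumes err_prob: "\<forall>w. prob_space (\<mu> w)"
    and err_borel: "\<forall>w. sets (\<mu> w) = sets borel"
    and err_sq: "\<forall>w. integrable (\<mu> w) (\<lambda>x. x\<^sup>2)"
    and err_mean: "\<forall>w. (LINT x|\<mu> w. x) = 0"
  shows "(LINT y|obs_law B \<mu>. (y u - (\<Sum>t\<in>T. c t * y t))\<^sup>2) =
    (\<Sum>w\<in>UNIV. (matrix_inv (mat 1 - B) $ u $ w - (\<Sum>t\<in>T. c t * matrix_inv (mat 1 - B) $ t $ w))\<^sup>2 * (LINT x|\<mu> w. x\<^sup>2))"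
proof -
  define A where "A = matrix_inv (mat 1 - B)"
  define F where "F = (\<lambda>e v. \<Sum>w\<in>UNIV. A $ v $ w * (e::'n \<Rightarrow> real) w)"
  define g where "g = (\<lambda>w. A $ u $ w - (\<Sum>t\<in>T. c t * A $ t $ w))"
  have comp[measurable]: "(\<lambda>e. e w) \<in> borel_measurable (PiM UNIV \<mu>)" for w
  proof -
    have "(\<lambda>e. e w) \<in> measurable (PiM UNIV \<mu>) (\<mu> w)"
      by (rule measurable_component_singleton) simp
    then show ?thesis using measurable_cong_sets[OF refl err_borel[rule_format, of w]] by metis
  qed
  have Fm: "F \<in> measurable (PiM UNIV \<mu>) (PiM UNIV (\<lambda>_. borel))"
    unfolding F_def by (rule measurable_PiM_single') (auto simp: space_PiM)
  have hm: "(\<lambda>y. (y u - (\<Sum>t\<in>T. c t * y t))\<^sup>2) \<in> borel_measurable (PiM UNIV (\<lambda>_. borel))"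
    by measurable
  have eq: "(F e u - (\<Sum>t\<in>T. c t * F e t)) = (\<Sum>w\<in>UNIV. g w * e w)" for e
  proof -
    have "(\<Sum>t\<in>T. c t * F e t) = (\<Sum>w\<in>UNIV. (\<Sum>t\<in>T. c t * A $ t $ w) * e w)"
      unfolding F_def by (simp add: sum_distrib_left sum_distrib_right mult.assoc sum.swap[of _ T])
    then show ?thesis
      unfolding F_def g_def by (simp add: left_diff_distrib sum_subtractf)
  qed
  have "(LINT y|obs_law B \<mu>. (y u - (\<Sum>t\<in>T. c t * y t))\<^sup>2)
      = (LINT e|PiM UNIV \<mu>. (F e u - (\<Sum>t\<in>T. c t * F e t))\<^sup>2)"
    unfolding obs_law_def F_def[symmetric] A_def[symmetric]
    by (rule integral_distr[OF Fm hm])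
  also have "\<dots> = (LINT e|PiM UNIV \<mu>. (\<Sum>w\<in>UNIV. g w * e w)\<^sup>2)"
    by (simp add: eq)
  also have "\<dots> = (\<Sum>w\<in>UNIV. (g w)\<^sup>2 * (LINT x|\<mu> w. x\<^sup>2))"
    using mse_formula[OF assms] by blast
  finally show ?thesis unfolding g_def A_def .
qed

lemma solve_ii:
  fixes A M :: "real^'n^'n::finite"
  assumes MA: "M ** A = mat 1"
    and Mz: "\<And>x t. x \<in> T \<Longrightarrow> t \<notin> T \<Longrightarrow> M $ x $ t = 0"
    and w: "w \<in> T"
  shows "(\<Sum>t\<in>T. (\<Sum>x\<in>T. A $ u $ x * M $ x $ t) * A $ t $ w) = A $ u $ w"
proof -
  have inner: "(\<Sum>t\<in>T. M $ x $ t * A $ t $ w) = (if x = w then 1 else 0)" if x: "x \<in> T" for x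
  proof -
    have "(\<Sum>t\<in>T. M $ x $ t * A $ t $ w) = (\<Sum>t\<in>UNIV. M $ x $ t * A $ t $ w)"
      by (rule sum.mono_neutral_left) (auto simp: Mz x)
    also have "\<dots> = (if x = w then 1 else 0)" by (rule entry_left[OF MA])
    finally show ?thesis .
  qed
  have "(\<Sum>t\<in>T. (\<Sum>x\<in>T. A $ u $ x * M $ x $ t) * A $ t $ w)
      = (\<Sum>t\<in>T. \<Sum>x\<in>T. A $ u $ x * M $ x $ t * A $ t $ w)"
    by (simp only: sum_distrib_right)
  also have "\<dots> = (\<Sum>x\<in>T. \<Sum>t\<in>T. A $ u $ x * M $ x $ t * A $ t $ w)"
    by (rule sum.swap)
  also have "\<dots> = (\<Sum>x\<in>T. A $ u $ x * (\<Sum>t\<in>T. M $ x $ t * A $ t $ w))"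
    by (simp only: sum_distrib_left mult.assoc)
  also have "\<dots> = (\<Sum>x\<in>T. A $ u $ x * (if x = w then 1 else 0))"
    by (rule sum.cong) (simp_all add: inner)
  also have "\<dots> = A $ u $ w" using w by (simp add: if_distrib cong: if_cong)
  finally show ?thesis .
qed

lemma solve_iii:
  fixes A M :: "real^'n^'n::finite"
  assumes AM: "A ** M = mat 1"
    and Az: "\<And>t w. t \<in> T \<Longrightarrow> w \<notin> T \<Longrightarrow> A $ t $ w = 0"
    and sol: "\<And>w. w \<in> T \<Longrightarrow> (\<Sum>t\<in>T. b t * A $ t $ w) = A $ u $ w"
    and s: "s \<in> T"
  shows "b s = (\<Sum>w\<in>T. A $ u $ w * M $ w $ s)"
proof -
  have inner: "(\<Sum>w\<in>T. A $ t $ w * M $ w $ s) = (if t = s then 1 else 0)" if t: "t \<in> T" for t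
  proof -
    have "(\<Sum>w\<in>T. A $ t $ w * M $ w $ s) = (\<Sum>w\<in>UNIV. A $ t $ w * M $ w $ s)"
      by (rule sum.mono_neutral_left) (auto simp: Az t)
    also have "\<dots> = (if t = s then 1 else 0)" by (rule entry_left[OF AM])
    finally show ?thesis .
  qed
  have "(\<Sum>w\<in>T. A $ u $ w * M $ w $ s) = (\<Sum>w\<in>T. (\<Sum>t\<in>T. b t * A $ t $ w) * M $ w $ s)"
    by (rule sum.cong) (simp_all add: sol)
  also have "\<dots> = (\<Sum>w\<in>T. \<Sum>t\<in>T. b t * A $ t $ w * M $ w $ s)"
    by (simp only: sum_distrib_right)
  also have "\<dots> = (\<Sum>t\<in>T. \<Sum>w\<in>T. b t * A $ t $ w * M $ w $ s)"
    by (rule sum.swap)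
  also have "\<dots> = (\<Sum>t\<in>T. b t * (\<Sum>w\<in>T. A $ t $ w * M $ w $ s))"
    by (simp only: sum_distrib_left mult.assoc)
  also have "\<dots> = (\<Sum>t\<in>T. b t * (if t = s then 1 else 0))"
    by (rule sum.cong) (simp_all add: inner)
  also have "\<dots> = b s" using s by (simp add: if_distrib cong: if_cong)
  finally show ?thesis by simp
qed

lemma valid_adj:
  fixes E :: "('n::finite \<times> 'n) set" and B :: "real^'n^'n" and \<mu> :: "'n \<Rightarrow> real measure"
  assumes dag: "acyclic E" and sem: "sem_matrix E B" and th: "\<theta> \<in> causal_orderings E"
    and err_prob: "\<forall>w. prob_space (\<mu> w)"
    and err_borel: "\<forall>w. sets (\<mu> w) = sets borel"
    and err_sq: "\<forall>w. integrable (\<mu> w) (\<lambda>x. x\<^sup>2)"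
    and err_mean: "\<forall>w. (LINT x|\<mu> w. x) = 0"
    and err_var: "\<forall>w. 0 < (LINT x|\<mu> w. x\<^sup>2)"
  shows "valid_adjustment B \<mu> u v (prec \<theta> v)"
proof -
  have tri: "\<And>x t. B $ x $ t \<noteq> 0 \<Longrightarrow> \<theta> t < \<theta> x" using B_tri[OF dag sem th] by blast
  have inj: "inj \<theta>" using th unfolding causal_orderings_def is_perm_def bij_betw_def by auto
  define M where "M = mat 1 - B"
  define A where "A = matrix_inv M"
  have AM: "A ** M = mat 1" and MA: "M ** A = mat 1"
    using inverse_exists[of B \<theta>, OF tri] unfolding A_def M_def by auto
  define T where "T = prec \<theta> v \<union> {v}"
  have memT: "t \<in> T \<longleftrightarrow> \<theta> t \<le> \<theta> v" for t
    using inj unfolding T_def prec_def by (auto dest: injD)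
  have Mentry: "M $ x $ t = (if x = t then 1 else 0) - B $ x $ t" for x t
    unfolding M_def by (simp add: mat_def)
  have Mz: "M $ x $ t = 0" if "x \<in> T" "t \<notin> T" for x t
  proof -
    have "x \<noteq> t" using that by auto
    moreover have "B $ x $ t = 0" using that tri[of x t] memT by force
    ultimately show ?thesis by (simp add: Mentry)
  qed
  have Az: "A $ t $ w = 0" if "t \<in> T" "w \<notin> T" for t w
    unfolding A_def M_def
    by (rule A_zero[of B \<theta>, OF tri inj]) (use that memT in auto)
  define \<sigma> where "\<sigma> w = (LINT x|\<mu> w. x\<^sup>2)" for w
  have \<sigma>pos: "0 < \<sigma> w" for w using err_var \<sigma>_def by auto
  have mse: "(LINT y|obs_law B \<mu>. (y u - (\<Sum>t\<in>T. c t * y t))\<^sup>2) =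
      (\<Sum>w\<in>UNIV. (A $ u $ w - (\<Sum>t\<in>T. c t * A $ t $ w))\<^sup>2 * \<sigma> w)" for c
    using obs_mse[OF err_prob err_borel err_sq err_mean, where u=u and c=c and T=T and B=B] unfolding A_def M_def \<sigma>_def by simp
  have off: "(\<Sum>t\<in>T. c t * A $ t $ w) = 0" if "w \<notin> T" for c w
    using Az that by simp
  define a where "a s = (if s \<in> T then (\<Sum>x\<in>T. A $ u $ x * M $ x $ s) else 0)" for s
  have ga: "(\<Sum>t\<in>T. a t * A $ t $ w) = A $ u $ w" if "w \<in> T" for w
  proof -
    have "(\<Sum>t\<in>T. a t * A $ t $ w) = (\<Sum>t\<in>T. (\<Sum>x\<in>T. A $ u $ x * M $ x $ t) * A $ t $ w)"
      by (rule sum.cong) (auto simp: a_def)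
    also have "\<dots> = A $ u $ w" by (rule solve_ii[OF MA Mz that])
    finally show ?thesis .
  qed
  have term_le: "(A $ u $ w - (\<Sum>t\<in>T. a t * A $ t $ w))\<^sup>2 * \<sigma> w \<le> (A $ u $ w - (\<Sum>t\<in>T. c t * A $ t $ w))\<^sup>2 * \<sigma> w" for c w
  proof (cases "w \<in> T")
    case True
    then show ?thesis using ga \<sigma>pos[of w] by simp
  next
    case False
    then show ?thesis using off[of w a] off[of w c] by simp
  qed
  have lsa: "ls_coef (obs_law B \<mu>) u T a"
    unfolding ls_coef_def
  proof (intro conjI allI impI)
    show "a t = 0" if "t \<notin> T" for t using that by (simp add: a_def)
    fix c :: "'n \<Rightarrow> real"
    show "(LINT y|obs_law B \<mu>. (y u - (\<Sum>t\<in>T. a t * y t))\<^sup>2) \<le> (LINT y|obs_law B \<mu>. (y u - (\<Sum>t\<in>T. c t * y t))\<^sup>2)"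
      unfolding mse by (rule sum_mono) (rule term_le)
  qed
  have uniq: "b v = total_effect B u v" if lsb: "ls_coef (obs_law B \<mu>) u T b" for b
  proof -
    have le: "(LINT y|obs_law B \<mu>. (y u - (\<Sum>t\<in>T. b t * y t))\<^sup>2) \<le> (LINT y|obs_law B \<mu>. (y u - (\<Sum>t\<in>T. a t * y t))\<^sup>2)"
      using lsb unfolding ls_coef_def using lsa unfolding ls_coef_def by blast
    have sol: "(\<Sum>t\<in>T. b t * A $ t $ w) = A $ u $ w" if w: "w \<in> T" for w
    proof (rule ccontr)
      assume ne: "(\<Sum>t\<in>T. b t * A $ t $ w) \<noteq> A $ u $ w"
      have "(\<Sum>w\<in>UNIV. (A $ u $ w - (\<Sum>t\<in>T. a t * A $ t $ w))\<^sup>2 * \<sigma> w)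
          < (\<Sum>w\<in>UNIV. (A $ u $ w - (\<Sum>t\<in>T. b t * A $ t $ w))\<^sup>2 * \<sigma> w)"
      proof (rule sum_strict_mono_ex1)
        show "\<forall>x\<in>UNIV. (A $ u $ x - (\<Sum>t\<in>T. a t * A $ t $ x))\<^sup>2 * \<sigma> x \<le> (A $ u $ x - (\<Sum>t\<in>T. b t * A $ t $ x))\<^sup>2 * \<sigma> x"
          using term_le by blast
        show "\<exists>x\<in>UNIV. (A $ u $ x - (\<Sum>t\<in>T. a t * A $ t $ x))\<^sup>2 * \<sigma> x < (A $ u $ x - (\<Sum>t\<in>T. b t * A $ t $ x))\<^sup>2 * \<sigma> x"
          using ga[OF w] ne \<sigma>pos[of w] by (intro bexI[of _ w]) auto
      qed simp
      with le show False unfolding mse by simp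
    qed
    have "b v = (\<Sum>w\<in>T. A $ u $ w * M $ w $ v)"
      by (rule solve_iii[OF AM Az sol]) (auto simp: memT)
    also have "\<dots> = (\<Sum>w\<in>T. A $ u $ w * (if w = v then 1 else 0))"
    proof (rule sum.cong)
      fix w assume "w \<in> T"
      then have "B $ w $ v = 0" using tri[of w v] memT by force
      then show "A $ u $ w * M $ w $ v = A $ u $ w * (if w = v then 1 else 0)" by (simp add: Mentry)
    qed simp
    also have "\<dots> = A $ u $ v" by (simp add: memT if_distrib cong: if_cong)
    finally show ?thesis unfolding total_effect_def A_def M_def .
  qed
  show ?thesis
    unfolding valid_adjustment_def T_def[symmetric]
    using lsa uniq by (auto simp: prec_def)
qed

lemma sample_prob:
  fixes \<mu> :: "'n::finite \<Rightarrow> real measure" and B :: "real^'n^'n"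
  assumes err_prob: "\<forall>w. prob_space (\<mu> w)"
    and err_borel: "\<forall>w. sets (\<mu> w) = sets borel"
  shows "prob_space (sample_law B \<mu> n)"
proof -
  have comp[measurable]: "(\<lambda>e. e w) \<in> borel_measurable (PiM UNIV \<mu>)" for w
  proof -
    have "(\<lambda>e. e w) \<in> measurable (PiM UNIV \<mu>) (\<mu> w)"
      by (rule measurable_component_singleton) simp
    then show ?thesis using measurable_cong_sets[OF refl err_borel[rule_format, of w]] by metis
  qed
  have Fm: "(\<lambda>e v. \<Sum>w\<in>UNIV. matrix_inv (mat 1 - B) $ v $ w * e w) \<in> measurable (PiM UNIV \<mu>) (PiM UNIV (\<lambda>_. borel))"
    by (rule measurable_PiM_single') (auto simp: space_PiM)
  have "prob_space (PiM UNIV \<mu>)" using err_prob by (intro prob_space_PiM) auto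
  then have "prob_space (obs_law B \<mu>)"
    unfolding obs_law_def by (rule prob_space.prob_space_distr[OF _ Fm])
  then show ?thesis unfolding sample_law_def by (intro prob_space_PiM)
qed

lemma prob_inter_ge:
  assumes "prob_space M" "A \<in> sets M" "B \<in> sets M"
  shows "measure M A + measure M B - 1 \<le> measure M (A \<inter> B)"
proof -
  interpret prob_space M by fact
  have "measure M (A \<union> B) \<le> 1" by (rule prob_le_1)
  moreover have "measure M (A \<union> B) = measure M A + measure M (B - A)"
    by (rule finite_measure_Union'[OF assms(2,3)])
  moreover have "measure M (B - A) = measure M B - measure M (A \<inter> B)"
    using finite_measure_Diff'[OF assms(3,2)] by (simp add: Int_commute)
  ultimately show ?thesis by linarith
qed

lemma liminf_combine:
  fixes f g h :: "nat \<Rightarrow> real"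
  assumes "ereal a \<le> Liminf sequentially (\<lambda>n. ereal (f n))"
    and "ereal b \<le> Liminf sequentially (\<lambda>n. ereal (g n))"
    and "\<And>n. f n + g n - 1 \<le> h n"
  shows "ereal (a + b - 1) \<le> Liminf sequentially (\<lambda>n. ereal (h n))"
  unfolding le_Liminf_iff
proof (intro allI impI)
  fix y assume y: "y < ereal (a + b - 1)"
  show "\<forall>\<^sub>F n in sequentially. y < ereal (h n)"
  proof (cases y)
    case (real r)
    define d where "d = (a + b - 1 - r) / 2"
    have d: "0 < d" using y real d_def by simp
    have "\<forall>\<^sub>F n in sequentially. ereal (a - d) < ereal (f n)"
      using assms(1)[unfolded le_Liminf_iff, rule_format, of "ereal (a - d)"] d by simp
    moreover have "\<forall>\<^sub>F n in sequentially. ereal (b - d) < ereal (g n)"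
      using assms(2)[unfolded le_Liminf_iff, rule_format, of "ereal (b - d)"] d by simp
    ultimately show ?thesis
    proof eventually_elim
      case (elim n)
      then show ?case using assms(3)[of n] real d_def by (simp, linarith)
    qed
  next
    case PInf then show ?thesis using y by simp
  next
    case MInf then show ?thesis by simp
  qed
qed

lemma pmono:
  assumes "prob_space M" "A \<subseteq> B" "B \<in> sets M"
  shows "measure M A \<le> measure M B"
proof -
  interpret prob_space M by fact
  show ?thesis by (rule finite_measure_mono[OF assms(2,3)])
qed

theorem lemma1:
  fixes E :: "('n::finite \<times> 'n) set" and B :: "real^'n^'n"
    and \<mu> :: "'n \<Rightarrow> real measure" and u v :: 'n and \<alpha> :: real
    and Thetahat :: "nat \<Rightarrow> (nat \<Rightarrow> 'n \<Rightarrow> real) \<Rightarrow> ('n \<Rightarrow> nat) set"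
    and C :: "nat \<Rightarrow> 'n set \<Rightarrow> (nat \<Rightarrow> 'n \<Rightarrow> real) \<Rightarrow> real set"
  assumes dag: "acyclic E"
    and sem: "sem_matrix E B"
    and err_prob: "\<forall>w. prob_space (\<mu> w)"
    and err_borel: "\<forall>w. sets (\<mu> w) = sets borel"
    and err_sq: "\<forall>w. integrable (\<mu> w) (\<lambda>x. x\<^sup>2)"
    and err_mean: "\<forall>w. (LINT x|\<mu> w. x) = 0"
    and err_var: "\<forall>w. 0 < (LINT x|\<mu> w. x\<^sup>2)"
    and uv: "u \<noteq> v"
    and alpha: "0 < \<alpha>" "\<alpha> < 1"
    and perms: "\<forall>n \<omega>. Thetahat n \<omega> \<subseteq> {\<theta>. is_perm \<theta>}"
    and meas_Theta: "\<forall>n \<theta>. {\<omega> \<in> space (sample_law B \<mu> n). \<theta> \<in> Thetahat n \<omega>} \<in> sets (sample_law B \<mu> n)"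
    and meas_C: "\<forall>n S. S \<subseteq> UNIV - {u, v} \<longrightarrow>
       {\<omega> \<in> space (sample_law B \<mu> n). total_effect B u v \<in> C n S \<omega>} \<in> sets (sample_law B \<mu> n)"
    and Theta_cov: "\<forall>\<theta>\<in>causal_orderings E.
       Liminf sequentially (\<lambda>n. ereal (prob_n B \<mu> n (\<lambda>\<omega>. \<theta> \<in> Thetahat n \<omega>))) \<ge> ereal (1 - \<alpha> / 2)"
    and C_cov: "\<forall>S. S \<subseteq> UNIV - {u, v} \<and> valid_adjustment B \<mu> u v S \<longrightarrow>
       Liminf sequentially (\<lambda>n. ereal (prob_n B \<mu> n (\<lambda>\<omega>. total_effect B u v \<in> C n S \<omega>))) \<ge> ereal (1 - \<alpha> / 2)"
  shows "Liminf sequentially (\<lambda>n. ereal (prob_n B \<mu> n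
           (\<lambda>\<omega>. total_effect B u v \<in> conf_set (Thetahat n \<omega>) (\<lambda>S. C n S \<omega>) u v)))
         \<ge> ereal (1 - \<alpha>)"
proof -
  define \<pi> where "\<pi> = total_effect B u v"
  define SL where "SL n = sample_law B \<mu> n" for n
  have ps: "prob_space (SL n)" for n unfolding SL_def by (rule sample_prob[OF err_prob err_borel])
  obtain \<theta> where th: "\<theta> \<in> causal_orderings E" using causal_ordering_exists[OF dag] by blast
  have tri: "\<And>x t. B $ x $ t \<noteq> 0 \<Longrightarrow> \<theta> t < \<theta> x" using B_tri[OF dag sem th] by blast
  have inj: "inj \<theta>" using th unfolding causal_orderings_def is_perm_def bij_betw_def by auto
  define Perms where "Perms = {\<theta>::'n \<Rightarrow> nat. is_perm \<theta>}"
  have finP: "finite Perms"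
  proof (rule finite_subset)
    show "Perms \<subseteq> PiE UNIV (\<lambda>_. {..<CARD('n)})"
      unfolding Perms_def is_perm_def bij_betw_def by auto
    show "finite (PiE (UNIV::'n set) (\<lambda>_. {..<CARD('n)}))" by (rule finite_PiE) auto
  qed
  define D where "D n = {\<omega> \<in> space (SL n). \<pi> \<in> conf_set (Thetahat n \<omega>) (\<lambda>S. C n S \<omega>) u v}" for n
  define Q where "Q n \<theta>' \<omega> = (\<theta>' \<in> Thetahat n \<omega> \<and>
      (if \<theta>' v < \<theta>' u then \<pi> \<in> C n (prec \<theta>' v) \<omega> else (\<theta>' u < \<theta>' v \<and> \<pi> = 0)))" for n \<theta>' \<omega>
  have Deq: "D n = {\<omega> \<in> space (SL n). \<exists>\<theta>'\<in>Perms. Q n \<theta>' \<omega>}" for n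
  proof -
    have "\<pi> \<in> conf_set (Thetahat n \<omega>) (\<lambda>S. C n S \<omega>) u v \<longleftrightarrow> (\<exists>\<theta>'\<in>Perms. Q n \<theta>' \<omega>)" for \<omega>
    proof
      assume h: "\<pi> \<in> conf_set (Thetahat n \<omega>) (\<lambda>S. C n S \<omega>) u v"
      show "\<exists>\<theta>'\<in>Perms. Q n \<theta>' \<omega>"
      proof (cases "\<pi> \<in> (\<Union>S\<in>adj_sets (Thetahat n \<omega>) u v. C n S \<omega>)")
        case True
        then obtain \<theta>' where t1: "\<theta>' \<in> Thetahat n \<omega>" "\<theta>' v < \<theta>' u" "\<pi> \<in> C n (prec \<theta>' v) \<omega>"
          unfolding adj_sets_def by blast
        have "\<theta>' \<in> Perms" using perms t1(1) unfolding Perms_def by blast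
        moreover have "Q n \<theta>' \<omega>" using t1 unfolding Q_def by simp
        ultimately show ?thesis by blast
      next
        case False
        then have "\<exists>\<theta>'\<in>Thetahat n \<omega>. \<theta>' u < \<theta>' v" and p0: "\<pi> = 0"
          using h unfolding conf_set_def by (auto split: if_splits)
        then obtain \<theta>' where t1: "\<theta>' \<in> Thetahat n \<omega>" "\<theta>' u < \<theta>' v" by blast
        have "\<theta>' \<in> Perms" using perms t1(1) unfolding Perms_def by blast
        moreover have "Q n \<theta>' \<omega>" using t1 p0 unfolding Q_def by simp
        ultimately show ?thesis by blast
      qed
    next
      assume "\<exists>\<theta>'\<in>Perms. Q n \<theta>' \<omega>"
      then obtain \<theta>' where q: "Q n \<theta>' \<omega>" by blast
      show "\<pi> \<in> conf_set (Thetahat n \<omega>) (\<lambda>S. C n S \<omega>) u v"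
      proof (cases "\<theta>' v < \<theta>' u")
        case True
        then have t1: "\<theta>' \<in> Thetahat n \<omega>" "\<pi> \<in> C n (prec \<theta>' v) \<omega>" using q unfolding Q_def by auto
        have "prec \<theta>' v \<in> adj_sets (Thetahat n \<omega>) u v" unfolding adj_sets_def using t1 True by blast
        then show ?thesis unfolding conf_set_def using t1 by blast
      next
        case False
        then have t1: "\<theta>' \<in> Thetahat n \<omega>" "\<theta>' u < \<theta>' v" "\<pi> = 0" using q unfolding Q_def by auto
        then show ?thesis unfolding conf_set_def by auto
      qed
    qed
    then show ?thesis unfolding D_def by auto
  qed
  have precsub: "prec \<theta>' v \<subseteq> UNIV - {u, v}" if "\<theta>' v < \<theta>' u" for \<theta>' :: "'n \<Rightarrow> nat"
    using that unfolding prec_def by auto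
  have Dmeas: "D n \<in> sets (SL n)" for n
    unfolding Deq
  proof (rule sets.sets_Collect_finite_Ex[OF _ finP])
    fix \<theta>' assume "\<theta>' \<in> Perms"
    show "{\<omega> \<in> space (SL n). Q n \<theta>' \<omega>} \<in> sets (SL n)"
    proof (cases "\<theta>' v < \<theta>' u")
      case True
      have "{\<omega> \<in> space (SL n). Q n \<theta>' \<omega>} = {\<omega> \<in> space (SL n). \<theta>' \<in> Thetahat n \<omega>} \<inter> {\<omega> \<in> space (SL n). \<pi> \<in> C n (prec \<theta>' v) \<omega>}"
        using True unfolding Q_def by auto
      then show ?thesis using meas_Theta meas_C precsub[OF True] unfolding SL_def \<pi>_def by auto
    next
      case False
      have "{\<omega> \<in> space (SL n). Q n \<theta>' \<omega>} = (if \<theta>' u < \<theta>' v \<and> \<pi> = 0 then {\<omega> \<in> space (SL n). \<theta>' \<in> Thetahat n \<omega>} else {})"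
        using False unfolding Q_def by auto
      then show ?thesis using meas_Theta unfolding SL_def by auto
    qed
  qed
  define Ath where "Ath n = {\<omega> \<in> space (SL n). \<theta> \<in> Thetahat n \<omega>}" for n
  have Ameas: "Ath n \<in> sets (SL n)" for n using meas_Theta unfolding Ath_def SL_def by auto
  have covA: "ereal (1 - \<alpha> / 2) \<le> Liminf sequentially (\<lambda>n. ereal (measure (SL n) (Ath n)))"
    using Theta_cov th unfolding prob_n_def Ath_def SL_def by auto
  have goal_eq: "(\<lambda>n. ereal (prob_n B \<mu> n (\<lambda>\<omega>. total_effect B u v \<in> conf_set (Thetahat n \<omega>) (\<lambda>S. C n S \<omega>) u v)))
      = (\<lambda>n. ereal (measure (SL n) (D n)))"
    unfolding prob_n_def D_def SL_def \<pi>_def by simp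
  have "ereal (1 - \<alpha>) \<le> Liminf sequentially (\<lambda>n. ereal (measure (SL n) (D n)))"
  proof (cases "\<theta> u < \<theta> v")
    case True
    have "\<pi> = 0" unfolding \<pi>_def total_effect_def by (rule A_zero[of B \<theta>, OF tri inj True])
    then have sub: "Ath n \<subseteq> D n" for n
    proof -
      have "\<theta> \<in> Perms" using th unfolding Perms_def causal_orderings_def by blast
      moreover have "Q n \<theta> \<omega>" if "\<omega> \<in> Ath n" for \<omega>
        using that True \<open>\<pi> = 0\<close> unfolding Q_def Ath_def by auto
      ultimately show ?thesis unfolding Deq Ath_def by blast
    qed
    have "ereal (1 - \<alpha>) \<le> ereal (1 - \<alpha> / 2)" using alpha by simp
    also note covA
    also have "Liminf sequentially (\<lambda>n. ereal (measure (SL n) (Ath n))) \<le> Liminf sequentially (\<lambda>n. ereal (measure (SL n) (D n)))"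
    proof (rule Liminf_mono, rule always_eventually, rule allI)
      fix n
      show "ereal (measure (SL n) (Ath n)) \<le> ereal (measure (SL n) (D n))"
        using pmono[OF ps sub Dmeas] by simp
    qed
    finally show ?thesis .
  next
    case False
    then have vu: "\<theta> v < \<theta> u" using inj uv by (metis injD nat_neq_iff)
    define S where "S = prec \<theta> v"
    have Ssub: "S \<subseteq> UNIV - {u, v}" unfolding S_def by (rule precsub[OF vu])
    have va: "valid_adjustment B \<mu> u v S"
      unfolding S_def by (rule valid_adj[OF dag sem th err_prob err_borel err_sq err_mean err_var])
    define Cs where "Cs n = {\<omega> \<in> space (SL n). \<pi> \<in> C n S \<omega>}" for n
    have Cmeas: "Cs n \<in> sets (SL n)" for n using meas_C Ssub unfolding Cs_def SL_def \<pi>_def by auto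
    have covC: "ereal (1 - \<alpha> / 2) \<le> Liminf sequentially (\<lambda>n. ereal (measure (SL n) (Cs n)))"
      using C_cov Ssub va unfolding prob_n_def Cs_def SL_def \<pi>_def by auto
    have sub: "Ath n \<inter> Cs n \<subseteq> D n" for n
    proof -
      have "\<theta> \<in> Perms" using th unfolding Perms_def causal_orderings_def by blast
      moreover have "Q n \<theta> \<omega>" if "\<omega> \<in> Ath n \<inter> Cs n" for \<omega>
        using that vu unfolding Q_def Ath_def Cs_def S_def by auto
      ultimately show ?thesis unfolding Deq Ath_def by blast
    qed
    have "measure (SL n) (Ath n) + measure (SL n) (Cs n) - 1 \<le> measure (SL n) (D n)" for n
      using prob_inter_ge[OF ps Ameas Cmeas, of n] pmono[OF ps sub Dmeas, of n]
      by linarith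
    from liminf_combine[OF covA covC this] show ?thesis by simp
  qed
  then show ?thesis unfolding goal_eq .
qed

end
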